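(* Let $d\ge 2$ and suppose $\mathbb{C}^d$ admits a complete set of mutually unbiased bases, i.e. rank-one projectors $\Pi^j_i$, $j=1,\dots,d+1$, $i=1,\dots,d$, with ${\rm tr}(\Pi^j_i\Pi^j_k)=\delta_{ik}$ and ${\rm tr}(\Pi^j_i\Pi^l_k)=\frac1d$ whenever $j\ne l$. Then for all $X\in{\cal L}(\mathbb{C}^d)$, $$\sum_{i,j}\frac{1}{d(d+1)}\Pi^j_iX\Pi^j_i=\frac{1}{d(d+1)}\Big(({\rm tr}\,X)I+X\Big),$$ and consequently the ensemble ${\cal P}=\{\Pi^j_i,\frac{1}{d(d+1)}\}$ has accessible fidelity $F_{\cal P}=\frac{2}{d+1}$.
   Context: ${\cal L}(\mathbb{C}^d)$ is the space of linear operators on $\mathbb{C}^d$. For an ensemble ${\cal P}=\{\Pi_k,\pi_k\}$ of pure states, a POVM ${\cal E}=\{E_b\}$ and a reproduction strategy ${\cal M}:b\mapsto\sigma_b$ (density operators), the average fidelity is $F_{\cal P}({\cal E},{\cal M})=\sum_{b,k}\pi_k\,{\rm tr}(\Pi_kE_b)\,{\rm tr}(\Pi_k\sigma_b)$, and the accessible fidelity is $F_{\cal P}=\sup_{{\cal E},{\cal M}}F_{\cal P}({\cal E},{\cal M})$. *)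

theory Defs
  imports "Jordan_Normal_Form.Matrix"
begin

definition mtrace :: "complex mat \<Rightarrow> complex" where
  "mtrace A = (\<Sum>i<dim_row A. A $$ (i,i))"

definition msum :: "nat \<Rightarrow> ('a \<Rightarrow> complex mat) \<Rightarrow> 'a set \<Rightarrow> complex mat" where
  "msum d f A = mat d d (\<lambda>(r,c). \<Sum>a\<in>A. f a $$ (r,c))"

definition quad_form :: "nat \<Rightarrow> complex mat \<Rightarrow> complex vec \<Rightarrow> complex" where
  "quad_form d A v = (\<Sum>i<d. \<Sum>j<d. cnj (v $ i) * A $$ (i,j) * v $ j)"

definition psd :: "nat \<Rightarrow> complex mat \<Rightarrow> bool" where
  "psd d A \<longleftrightarrow> A \<in> carrier_mat d d \<and>
     (\<forall>v\<in>carrier_vec d. Im (quad_form d A v) = 0 \<and> Re (quad_form d A v) \<ge> 0)"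

definition density_op :: "nat \<Rightarrow> complex mat \<Rightarrow> bool" where
  "density_op d \<sigma> \<longleftrightarrow> psd d \<sigma> \<and> mtrace \<sigma> = 1"

definition rank_one_projector :: "nat \<Rightarrow> complex mat \<Rightarrow> bool" where
  "rank_one_projector d P \<longleftrightarrow> (\<exists>v\<in>carrier_vec d. (\<Sum>i<d. (cmod (v $ i))\<^sup>2) = 1 \<and>
      P = mat d d (\<lambda>(i,j). v $ i * cnj (v $ j)))"

definition povm :: "nat \<Rightarrow> nat set \<Rightarrow> (nat \<Rightarrow> complex mat) \<Rightarrow> bool" where
  "povm d B E \<longleftrightarrow> finite B \<and> (\<forall>b\<in>B. psd d (E b)) \<and> msum d E B = 1\<^sub>m d"

definition avg_fidelity ::
  "'k set \<Rightarrow> ('k \<Rightarrow> complex mat) \<Rightarrow> ('k \<Rightarrow> real) \<Rightarrow> nat set \<Rightarrow> (nat \<Rightarrow> complex mat)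
     \<Rightarrow> (nat \<Rightarrow> complex mat) \<Rightarrow> real" where
  "avg_fidelity K Proj p B E \<sigma> =
     Re (\<Sum>b\<in>B. \<Sum>k\<in>K. complex_of_real (p k) * mtrace (Proj k * E b) * mtrace (Proj k * \<sigma> b))"

definition accessible_fidelity ::
  "nat \<Rightarrow> 'k set \<Rightarrow> ('k \<Rightarrow> complex mat) \<Rightarrow> ('k \<Rightarrow> real) \<Rightarrow> real" where
  "accessible_fidelity d K Proj p = Sup {avg_fidelity K Proj p B E \<sigma> | B E \<sigma>.
      povm d B E \<and> (\<forall>b\<in>B. density_op d (\<sigma> b))}"

end

theory Submission
  imports Defs
begin

definition ipr :: "nat \<Rightarrow> ('k \<Rightarrow> nat \<Rightarrow> complex) \<Rightarrow> 'k \<Rightarrow> 'k \<Rightarrow> complex" where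
  "ipr d u k l = (\<Sum>a<d. u k a * cnj (u l a))"

definition TT :: "nat \<Rightarrow> 'k set \<Rightarrow> ('k \<Rightarrow> nat \<Rightarrow> complex) \<Rightarrow> nat \<Rightarrow> nat \<Rightarrow> nat \<Rightarrow> nat \<Rightarrow> complex" where
  "TT d K u a b c e = (\<Sum>k\<in>K. u k a * cnj (u k b) * u k c * cnj (u k e))"

definition SS :: "nat \<Rightarrow> nat \<Rightarrow> nat \<Rightarrow> nat \<Rightarrow> complex" where
  "SS a b c e = (if a = e \<and> b = c then 1 else 0) + (if a = b \<and> c = e then 1 else 0)"

lemma four_prod:
  "(\<Sum>a<d. f a) * (\<Sum>b<d. g b) * (\<Sum>c<d. h c) * (\<Sum>e<d. w e) =
   (\<Sum>a<d. \<Sum>b<d. \<Sum>c<d. \<Sum>e<d. f a * g b * h c * w e :: complex)"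
proof -
  have "(\<Sum>a<d. \<Sum>b<d. \<Sum>c<d. \<Sum>e<d. f a * (g b * (h c * w e))) = 
        (\<Sum>a<d. f a) * ((\<Sum>b<d. g b) * ((\<Sum>c<d. h c) * (\<Sum>e<d. w e)))"
    by (simp only: sum_distrib_left[symmetric] sum_distrib_right[symmetric])
  then show ?thesis by (simp add: mult.assoc)
qed

lemma swap_out:
  "(\<Sum>a<d. \<Sum>b<d. \<Sum>c<d. \<Sum>e<d. \<Sum>k\<in>K. F k a b c e :: complex) =
   (\<Sum>k\<in>K. \<Sum>a<d. \<Sum>b<d. \<Sum>c<d. \<Sum>e<d. F k a b c e)"
proof -
  have "(\<Sum>a<d. \<Sum>b<d. \<Sum>c<d. \<Sum>e<d. \<Sum>k\<in>K. F k a b c e) =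
        (\<Sum>a<d. \<Sum>b<d. \<Sum>c<d. \<Sum>k\<in>K. \<Sum>e<d. F k a b c e)"
    by (simp add: sum.swap[of _ "{..<d}" K])
  also have "\<dots> = (\<Sum>a<d. \<Sum>b<d. \<Sum>k\<in>K. \<Sum>c<d. \<Sum>e<d. F k a b c e)"
    by (simp add: sum.swap[of _ "{..<d}" K])
  also have "\<dots> = (\<Sum>a<d. \<Sum>k\<in>K. \<Sum>b<d. \<Sum>c<d. \<Sum>e<d. F k a b c e)"
    by (simp add: sum.swap[of _ "{..<d}" K])
  also have "\<dots> = (\<Sum>k\<in>K. \<Sum>a<d. \<Sum>b<d. \<Sum>c<d. \<Sum>e<d. F k a b c e)"
    by (rule sum.swap)
  finally show ?thesis .
qed

lemma TT_TT:
  "(\<Sum>a<d. \<Sum>b<d. \<Sum>c<d. \<Sum>e<d. TT d K u a b c e * cnj (TT d K u a b c e)) =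
   (\<Sum>k\<in>K. \<Sum>l\<in>K. (ipr d u k l * cnj (ipr d u k l))^2)"
proof -
  have "(\<Sum>a<d. \<Sum>b<d. \<Sum>c<d. \<Sum>e<d. TT d K u a b c e * cnj (TT d K u a b c e)) =
    (\<Sum>a<d. \<Sum>b<d. \<Sum>c<d. \<Sum>e<d. \<Sum>k\<in>K. \<Sum>l\<in>K.
       (u k a * cnj (u k b) * u k c * cnj (u k e)) * cnj (u l a * cnj (u l b) * u l c * cnj (u l e)))"
    unfolding TT_def by (simp add: sum_product cnj_sum)
  also have "\<dots> = (\<Sum>k\<in>K. \<Sum>a<d. \<Sum>b<d. \<Sum>c<d. \<Sum>e<d. \<Sum>l\<in>K.
       (u k a * cnj (u k b) * u k c * cnj (u k e)) * cnj (u l a * cnj (u l b) * u l c * cnj (u l e)))"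
    by (rule swap_out)
  also have "\<dots> = (\<Sum>k\<in>K. \<Sum>l\<in>K. \<Sum>a<d. \<Sum>b<d. \<Sum>c<d. \<Sum>e<d. 
       (u k a * cnj (u k b) * u k c * cnj (u k e)) * cnj (u l a * cnj (u l b) * u l c * cnj (u l e)))"
    by (subst swap_out, rule refl)
  also have "\<dots> = (\<Sum>k\<in>K. \<Sum>l\<in>K. ipr d u k l * ipr d u l k * ipr d u k l * ipr d u l k)"
  proof (intro sum.cong refl)
    fix k l
    show "(\<Sum>a<d. \<Sum>b<d. \<Sum>c<d. \<Sum>e<d. 
       (u k a * cnj (u k b) * u k c * cnj (u k e)) * cnj (u l a * cnj (u l b) * u l c * cnj (u l e))) =
       ipr d u k l * ipr d u l k * ipr d u k l * ipr d u l k"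
      unfolding ipr_def four_prod by (intro sum.cong refl) (simp add: algebra_simps)
  qed
  also have "\<dots> = (\<Sum>k\<in>K. \<Sum>l\<in>K. (ipr d u k l * cnj (ipr d u k l))^2)"
    by (intro sum.cong refl) (simp add: ipr_def cnj_sum power2_eq_square algebra_simps)
  finally show ?thesis .
qed

lemma dsum: "a < (d::nat) \<Longrightarrow> (\<Sum>e<d. if a = e \<and> P then G e else 0) = (if P then G a else (0::complex))"
  by (cases P) (auto simp: sum.delta sum.delta')
lemma dsum': "a < (d::nat) \<Longrightarrow> (\<Sum>e<d. if P \<and> a = e then G e else 0) = (if P then G a else (0::complex))"
  by (cases P) (auto simp: sum.delta sum.delta')

lemma delta1: "(\<Sum>a<(d::nat). \<Sum>b<d. \<Sum>c<d. \<Sum>e<d. F a b c e * (if a = e \<and> b = c then 1 else (0::complex))) =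
   (\<Sum>a<d. \<Sum>b<d. F a b b a)"
proof (intro sum.cong refl)
  fix a b assume "a \<in> {..<d}" "b \<in> {..<d}"
  then show "(\<Sum>c<d. \<Sum>e<d. F a b c e * (if a = e \<and> b = c then 1 else (0::complex))) = F a b b a"
    by (simp add: if_distrib dsum cong: if_cong)
qed

lemma delta2: "(\<Sum>a<(d::nat). \<Sum>b<d. \<Sum>c<d. \<Sum>e<d. F a b c e * (if a = b \<and> c = e then 1 else (0::complex))) =
   (\<Sum>a<d. \<Sum>c<d. F a a c c)"
proof (rule sum.cong[OF refl])
  fix a assume "a \<in> {..<d}" 
  show "(\<Sum>b<d. \<Sum>c<d. \<Sum>e<d. F a b c e * (if a = b \<and> c = e then 1 else (0::complex))) = (\<Sum>c<d. F a a c c)"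
  proof -
    have "(\<Sum>c<d. \<Sum>e<d. F a b c e * (if a = b \<and> c = e then 1 else (0::complex))) =
       (if a = b then (\<Sum>c<d. F a b c c) else 0)" if "b < d" for b
      by (cases "a = b") (simp_all add: if_distrib cong: if_cong)
    then have "(\<Sum>b<d. \<Sum>c<d. \<Sum>e<d. F a b c e * (if a = b \<and> c = e then 1 else (0::complex))) =
       (\<Sum>b<d. if a = b then (\<Sum>c<d. F a b c c) else 0)" by (intro sum.cong refl) simp
    also have "\<dots> = (\<Sum>c<d. F a a c c)" using \<open>a \<in> {..<d}\<close> by simp
    finally show ?thesis .
  qed
qed


lemma SS_cnj: "cnj (SS a b c e) = SS a b c e" unfolding SS_def by (simp add: if_distrib)

lemma SS_SS: "(\<Sum>a<(d::nat). \<Sum>b<d. \<Sum>c<d. \<Sum>e<d. SS a b c e * cnj (SS a b c e)) = 2 * of_nat d * (of_nat d + 1)"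
proof -
  have "(\<Sum>a<d. \<Sum>b<d. \<Sum>c<d. \<Sum>e<d. SS a b c e * cnj (SS a b c e)) = 
    (\<Sum>a<d. \<Sum>b<d. \<Sum>c<d. \<Sum>e<d. SS a b c e * (if a = e \<and> b = c then 1 else 0)) +
    (\<Sum>a<d. \<Sum>b<d. \<Sum>c<d. \<Sum>e<d. SS a b c e * (if a = b \<and> c = e then 1 else 0))"
    unfolding SS_cnj by (simp only: sum.distrib[symmetric] distrib_left[symmetric]) (simp only: SS_def)
  also have "\<dots> = (\<Sum>a<d. \<Sum>b<d. SS a b b a) + (\<Sum>a<d. \<Sum>c<d. SS a a c c)"
    unfolding delta1 delta2 by (rule refl)
  also have "\<dots> = (\<Sum>a<d. \<Sum>b<d. 1 + (if a = b then 1 else 0)) + (\<Sum>a<d. \<Sum>c<d. (if a = c then 1 else 0) + 1)"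
  proof -
    have h1: "SS a b b a = 1 + (if a = b then 1 else 0)" for a b by (simp add: SS_def)
    have h2: "SS a a c c = (if a = c then 1 else 0) + 1" for a c by (simp add: SS_def)
    show ?thesis by (simp only: h1 h2)
  qed
  also have "\<dots> = 2 * of_nat d * (of_nat d + 1)"
    by (simp add: sum.distrib algebra_simps)
  finally show ?thesis .
qed

lemma TT_SS:
  assumes fin: "finite K" and nrm: "\<And>k. k \<in> K \<Longrightarrow> ipr d u k k = 1"
  shows "(\<Sum>a<d. \<Sum>b<d. \<Sum>c<d. \<Sum>e<d. TT d K u a b c e * cnj (SS a b c e)) = 2 * of_nat (card K)"
proof -
  have "(\<Sum>a<d. \<Sum>b<d. \<Sum>c<d. \<Sum>e<d. TT d K u a b c e * cnj (SS a b c e)) =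
     (\<Sum>a<d. \<Sum>b<d. \<Sum>c<d. \<Sum>e<d. \<Sum>k\<in>K. u k a * cnj (u k b) * u k c * cnj (u k e) * SS a b c e)"
    unfolding SS_cnj TT_def by (simp add: sum_distrib_right)
  also have "\<dots> = (\<Sum>k\<in>K. \<Sum>a<d. \<Sum>b<d. \<Sum>c<d. \<Sum>e<d. u k a * cnj (u k b) * u k c * cnj (u k e) * SS a b c e)"
    by (rule swap_out)
  also have "\<dots> = (\<Sum>k\<in>K. 2)"
  proof (intro sum.cong refl)
    fix k assume k: "k \<in> K"
    have "(\<Sum>a<d. \<Sum>b<d. \<Sum>c<d. \<Sum>e<d. u k a * cnj (u k b) * u k c * cnj (u k e) * SS a b c e) =
      (\<Sum>a<d. \<Sum>b<d. \<Sum>c<d. \<Sum>e<d. u k a * cnj (u k b) * u k c * cnj (u k e) * (if a = e \<and> b = c then 1 else 0)) +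
      (\<Sum>a<d. \<Sum>b<d. \<Sum>c<d. \<Sum>e<d. u k a * cnj (u k b) * u k c * cnj (u k e) * (if a = b \<and> c = e then 1 else 0))"
      by (simp only: sum.distrib[symmetric] distrib_left[symmetric]) (simp only: SS_def)
    also have "\<dots> = (\<Sum>a<d. \<Sum>b<d. u k a * cnj (u k b) * u k b * cnj (u k a)) +
        (\<Sum>a<d. \<Sum>c<d. u k a * cnj (u k a) * u k c * cnj (u k c))"
      unfolding delta1 delta2 by (rule refl)
    also have "\<dots> = ipr d u k k * ipr d u k k + ipr d u k k * ipr d u k k"
      unfolding ipr_def by (simp add: sum_distrib_left sum_distrib_right algebra_simps)
    also have "\<dots> = 2" using nrm[OF k] by simp
    finally show "(\<Sum>a<d. \<Sum>b<d. \<Sum>c<d. \<Sum>e<d. u k a * cnj (u k b) * u k c * cnj (u k e) * SS a b c e) = 2" .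
  qed
  also have "\<dots> = 2 * of_nat (card K)" by simp
  finally show ?thesis .
qed

lemma TT_eq_SS:
  assumes fin: "finite K" and nrm: "\<And>k. k \<in> K \<Longrightarrow> ipr d u k k = 1"
    and cardK: "card K = d * (d + 1)"
    and fp: "(\<Sum>k\<in>K. \<Sum>l\<in>K. (ipr d u k l * cnj (ipr d u k l))^2) = 2 * of_nat (card K)"
    and abce: "a < d" "b < d" "c < d" "e < d"
  shows "TT d K u a b c e = SS a b c e"
proof -
  let ?D = "\<lambda>a b c e. TT d K u a b c e - SS a b c e"
  have "(\<Sum>a<d. \<Sum>b<d. \<Sum>c<d. \<Sum>e<d. ?D a b c e * cnj (?D a b c e)) =
    (\<Sum>a<d. \<Sum>b<d. \<Sum>c<d. \<Sum>e<d. TT d K u a b c e * cnj (TT d K u a b c e)) -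
    (\<Sum>a<d. \<Sum>b<d. \<Sum>c<d. \<Sum>e<d. TT d K u a b c e * cnj (SS a b c e)) -
    cnj (\<Sum>a<d. \<Sum>b<d. \<Sum>c<d. \<Sum>e<d. TT d K u a b c e * cnj (SS a b c e)) +
    (\<Sum>a<d. \<Sum>b<d. \<Sum>c<d. \<Sum>e<d. SS a b c e * cnj (SS a b c e))"
    by (simp add: sum_subtractf sum.distrib cnj_sum algebra_simps)
  also have "\<dots> = 0"
  proof -
    have tts: "(\<Sum>a<d. \<Sum>b<d. \<Sum>c<d. \<Sum>e<d. TT d K u a b c e * cnj (SS a b c e)) = 2 * of_nat (card K)"
      by (rule TT_SS[OF fin nrm])
    show ?thesis by (simp only: TT_TT tts SS_SS fp cardK) (simp add: algebra_simps)
  qed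
  finally have z: "(\<Sum>a<d. \<Sum>b<d. \<Sum>c<d. \<Sum>e<d. ?D a b c e * cnj (?D a b c e)) = 0" .
  have r: "?D a b c e * cnj (?D a b c e) = complex_of_real ((cmod (?D a b c e))^2)" for a b c e
    by (rule complex_norm_square[symmetric])
  have "complex_of_real (\<Sum>a<d. \<Sum>b<d. \<Sum>c<d. \<Sum>e<d. (cmod (?D a b c e))^2) = 0"
    using z unfolding r of_real_sum .
  then have "(\<Sum>a<d. \<Sum>b<d. \<Sum>c<d. \<Sum>e<d. (cmod (?D a b c e))^2) = 0"
    by (simp only: of_real_eq_0_iff)
  then have "(cmod (?D a b c e))^2 = 0"
    using abce by (simp add: sum_nonneg_eq_0_iff sum_nonneg)
  then show ?thesis by simp
qed

definition R1 :: "nat \<Rightarrow> (nat \<Rightarrow> complex) \<Rightarrow> complex mat" where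
  "R1 d x = mat d d (\<lambda>(a,b). x a * cnj (x b))"

lemma R1_carrier[simp]: "R1 d x \<in> carrier_mat d d" by (simp add: R1_def)

lemma mtrace_mult:
  assumes "A \<in> carrier_mat d d" "B \<in> carrier_mat d d"
  shows "mtrace (A * B) = (\<Sum>i<d. \<Sum>j<d. A $$ (i,j) * B $$ (j,i))"
  using assms by (simp add: mtrace_def scalar_prod_def atLeast0LessThan)

lemma mtrace_R1R1: "mtrace (R1 d x * R1 d y) = (\<Sum>a<d. x a * cnj (y a)) * cnj (\<Sum>a<d. x a * cnj (y a))"
proof -
  have "mtrace (R1 d x * R1 d y) = (\<Sum>i<d. \<Sum>j<d. (x i * cnj (x j)) * (y j * cnj (y i)))"
    unfolding mtrace_mult[OF R1_carrier R1_carrier] by (simp add: R1_def)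
  also have "\<dots> = (\<Sum>i<d. \<Sum>j<d. (x i * cnj (y i)) * (cnj (x j) * y j))"
    by (intro sum.cong refl) (simp add: algebra_simps)
  also have "\<dots> = (\<Sum>a<d. x a * cnj (y a)) * (\<Sum>a<d. cnj (x a) * y a)"
    by (simp only: sum_product)
  also have "\<dots> = (\<Sum>a<d. x a * cnj (y a)) * cnj (\<Sum>a<d. x a * cnj (y a))"
    by (simp add: cnj_sum mult.commute)
  finally show ?thesis .
qed

lemma R1XR1:
  assumes "X \<in> carrier_mat d d" "a < d" "e < d"
  shows "(R1 d x * X * R1 d x) $$ (a,e) = (\<Sum>b<d. \<Sum>c<d. X $$ (b,c) * (x a * cnj (x b) * x c * cnj (x e)))"
proof -
  have "(R1 d x * X * R1 d x) $$ (a,e) = (\<Sum>c<d. (\<Sum>b<d. (x a * cnj (x b)) * X $$ (b,c)) * (x c * cnj (x e)))"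
    using assms by (simp add: R1_def scalar_prod_def atLeast0LessThan)
  also have "\<dots> = (\<Sum>c<d. \<Sum>b<d. X $$ (b,c) * (x a * cnj (x b) * x c * cnj (x e)))"
    by (intro sum.cong refl) (simp add: sum_distrib_left sum_distrib_right mult_ac)
  also have "\<dots> = (\<Sum>b<d. \<Sum>c<d. X $$ (b,c) * (x a * cnj (x b) * x c * cnj (x e)))"
    by (rule sum.swap)
  finally show ?thesis .
qed

lemma mtrace_R1:
  assumes "E \<in> carrier_mat d d"
  shows "mtrace (R1 d x * E) = (\<Sum>a<d. \<Sum>b<d. E $$ (b,a) * (x a * cnj (x b)))"
  unfolding mtrace_mult[OF R1_carrier assms] by (simp add: R1_def mult.commute)

lemma ifz_mult: "(if P then a else 0) * b = (if P then a * b else (0::complex))" by simp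
lemma mult_ifz: "b * (if P then a else 0) = (if P then b * a else (0::complex))" by simp

lemma cnj_ifz: "cnj (if P then a else 0) = (if P then cnj a else 0)" by simp

lemma qf1:
  assumes "i < d"
  shows "quad_form d A (vec d (\<lambda>p. if p = i then 1 else 0)) = A $$ (i,i)"
proof -
  have "quad_form d A (vec d (\<lambda>p. if p = i then 1 else 0)) =
     (\<Sum>p<d. \<Sum>q<d. cnj (if p = i then 1 else 0) * A $$ (p,q) * (if q = i then 1 else 0))"
    unfolding quad_form_def by (intro sum.cong refl) simp
  also have "\<dots> = A $$ (i,i)" using assms by (simp add: ifz_mult mult_ifz cnj_ifz)
  finally show ?thesis .
qed

lemma qf2:
  assumes "i < d" "j < d" "i \<noteq> j"
  shows "quad_form d A (vec d (\<lambda>p. (if p = i then x else 0) + (if p = j then y else 0))) =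
    cnj x * A $$ (i,i) * x + cnj x * A $$ (i,j) * y + cnj y * A $$ (j,i) * x + cnj y * A $$ (j,j) * y"
proof -
  have "quad_form d A (vec d (\<lambda>p. (if p = i then x else 0) + (if p = j then y else 0))) =
     (\<Sum>p<d. \<Sum>q<d. cnj ((if p = i then x else 0) + (if p = j then y else 0)) * A $$ (p,q) * ((if q = i then x else 0) + (if q = j then y else 0)))"
    unfolding quad_form_def by (intro sum.cong refl) simp
  also have "\<dots> = (\<Sum>p<d. \<Sum>q<d. 
       (if p = i then cnj x else 0) * A $$ (p,q) * (if q = i then x else 0) + 
       (if p = i then cnj x else 0) * A $$ (p,q) * (if q = j then y else 0) + 
       (if p = j then cnj y else 0) * A $$ (p,q) * (if q = i then x else 0) + 
       (if p = j then cnj y else 0) * A $$ (p,q) * (if q = j then y else 0))"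
    by (intro sum.cong refl) (simp add: algebra_simps)
  also have "\<dots> = cnj x * A $$ (i,i) * x + cnj x * A $$ (i,j) * y + cnj y * A $$ (j,i) * x + cnj y * A $$ (j,j) * y"
    using assms by (simp add: sum.distrib ifz_mult mult_ifz)
  finally show ?thesis .
qed

lemma psd_diag:
  assumes "psd d A" "i < d"
  shows "Im (A $$ (i,i)) = 0" "Re (A $$ (i,i)) \<ge> 0"
proof -
  have v: "vec d (\<lambda>p. if p = i then 1 else 0) \<in> carrier_vec d" by simp
  show "Im (A $$ (i,i)) = 0" "Re (A $$ (i,i)) \<ge> 0"
    using assms(1) v qf1[OF assms(2), of A] unfolding psd_def by metis+
qed

lemma psd_herm:
  assumes "psd d A" "i < d" "j < d"
  shows "A $$ (j,i) = cnj (A $$ (i,j))"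
proof (cases "i = j")
  case True
  then show ?thesis using psd_diag[OF assms(1,2)] by (simp add: complex_eq_iff)
next
  case False
  let ?v = "\<lambda>x y. vec d (\<lambda>p. (if p = i then x else 0) + (if p = j then y else (0::complex)))"
  have c: "?v x y \<in> carrier_vec d" for x y by simp
  have "Im (quad_form d A (?v 1 1)) = 0" using assms(1) c unfolding psd_def by blast
  then have 1: "Im (A $$ (i,j)) + Im (A $$ (j,i)) = 0"
    using qf2[OF assms(2,3) False, of A 1 1] psd_diag[OF assms(1,2)] psd_diag[OF assms(1,3)] by simp
  have "Im (quad_form d A (?v 1 \<i>)) = 0" using assms(1) c unfolding psd_def by blast
  then have 2: "Re (A $$ (i,j)) - Re (A $$ (j,i)) = 0"
    using qf2[OF assms(2,3) False, of A 1 \<i>] psd_diag[OF assms(1,2)] psd_diag[OF assms(1,3)] by simp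
  show ?thesis using 1 2 by (simp add: complex_eq_iff)
qed

lemma alg1: fixes a b :: real and z :: complex
  shows "cnj (complex_of_real b) * complex_of_real a * complex_of_real b + cnj (complex_of_real b) * z * (- cnj z) + cnj (- cnj z) * cnj z * complex_of_real b + cnj (- cnj z) * complex_of_real b * (- cnj z)
   = complex_of_real (b * (a * b)) - complex_of_real b * (z * cnj z)"
  by (simp add: algebra_simps)
lemma alg2: fixes a t :: real and z :: complex
  shows "cnj 1 * complex_of_real a * 1 + cnj 1 * z * (- complex_of_real t * cnj z) + cnj (- complex_of_real t * cnj z) * cnj z * 1 + cnj (- complex_of_real t * cnj z) * complex_of_real 0 * (- complex_of_real t * cnj z)
   = complex_of_real a - 2 * complex_of_real t * (z * cnj z)"
  by (simp add: algebra_simps)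

lemma psd_offdiag:
  assumes "psd d A" "i < d" "j < d"
  shows "(cmod (A $$ (i,j)))^2 \<le> Re (A $$ (i,i)) * Re (A $$ (j,j))"
proof (cases "i = j")
  case True
  have "A $$ (i,i) = complex_of_real (Re (A $$ (i,i)))" using psd_diag[OF assms(1,2)] by (simp add: complex_eq_iff)
  then have "cmod (A $$ (i,i)) = \<bar>Re (A $$ (i,i))\<bar>" by (metis norm_of_real)
  then show ?thesis using True by (simp add: power2_eq_square)
next
  case False
  define a where "a = Re (A $$ (i,i))"
  define b where "b = Re (A $$ (j,j))"
  define z where "z = A $$ (i,j)"
  have Ai: "A $$ (i,i) = complex_of_real a" using psd_diag[OF assms(1,2)] by (simp add: complex_eq_iff a_def)
  have Aj: "A $$ (j,j) = complex_of_real b" using psd_diag[OF assms(1,3)] by (simp add: complex_eq_iff b_def)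
  have a0: "a \<ge> 0" using psd_diag[OF assms(1,2)] by (simp add: a_def)
  have b0: "b \<ge> 0" using psd_diag[OF assms(1,3)] by (simp add: b_def)
  have Aji: "A $$ (j,i) = cnj z" using psd_herm[OF assms] by (simp add: z_def)
  have zz: "z * cnj z = complex_of_real ((cmod z)^2)" by (rule complex_norm_square[symmetric])
  let ?v = "\<lambda>x y. vec d (\<lambda>p. (if p = i then x else 0) + (if p = j then y else (0::complex)))"
  have c: "?v x y \<in> carrier_vec d" for x y by simp
  have pos: "Re (quad_form d A (?v x y)) \<ge> 0" for x y using assms(1) c unfolding psd_def by blast
  have q: "quad_form d A (?v x y) = cnj x * a * x + cnj x * z * y + cnj y * cnj z * x + cnj y * b * y" for x y
    using qf2[OF assms(2,3) False, of A x y] Ai Aj Aji z_def by simp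
  show ?thesis
  proof (cases "b > 0")
    case True
    have "quad_form d A (?v (complex_of_real b) (- cnj z)) = complex_of_real (b * (a * b)) - complex_of_real b * (z * cnj z)"
      unfolding q by (rule alg1)
    also have "\<dots> = complex_of_real (b * (a * b - (cmod z)^2))" unfolding zz by (simp add: algebra_simps)
    finally have "b * (a * b - (cmod z)^2) \<ge> 0" using pos[of "complex_of_real b" "- cnj z"] by simp
    then have "a * b - (cmod z)^2 \<ge> 0" using True by (simp add: zero_le_mult_iff)
    then show ?thesis by (simp add: a_def b_def z_def)
  next
    case False
    then have b: "b = 0" using b0 by simp
    have "z = 0"
    proof (rule ccontr)
      assume "z \<noteq> 0"
      then have n: "(cmod z)^2 > 0" by simp
      define t where "t = (a + 1) / (cmod z)^2"
      have "quad_form d A (?v 1 (- complex_of_real t * cnj z)) = complex_of_real a - 2 * complex_of_real t * (z * cnj z)"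
        unfolding q b by (rule alg2)
      also have "\<dots> = complex_of_real (a - 2 * t * (cmod z)^2)" unfolding zz by simp
      finally have "a - 2 * t * (cmod z)^2 \<ge> 0" using pos[of 1 "- complex_of_real t * cnj z"] by simp
      moreover have "t * (cmod z)^2 = a + 1" using n by (simp add: t_def)
      ultimately show False using a0 by linarith
    qed
    then show ?thesis using a0 b by (simp add: a_def b_def z_def)
  qed
qed

lemma mtrace_re:
  assumes "psd d A"
  shows "Re (mtrace A) = (\<Sum>i<d. Re (A $$ (i,i)))"
  using assms unfolding psd_def mtrace_def by auto

lemma prod_bound:
  fixes p q ei ej si sj :: real
  assumes "p \<ge> 0" "q \<ge> 0" "p^2 \<le> ei * ej" "q^2 \<le> sj * si" "ei \<ge> 0" "ej \<ge> 0" "si \<ge> 0" "sj \<ge> 0"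
  shows "p * q \<le> (ei * sj + ej * si) / 2"
proof -
  have "(p * q)^2 = p^2 * q^2" by (simp add: power_mult_distrib)
  also have "\<dots> \<le> (ei * ej) * (sj * si)"
    using assms by (intro mult_mono) auto
  also have "\<dots> \<le> ((ei * sj + ej * si) / 2)^2"
  proof -
    have "0 \<le> (ei * sj - ej * si)^2" by simp
    moreover have "((ei * sj + ej * si) / 2)^2 - (ei * ej) * (sj * si) = (ei * sj - ej * si)^2 / 4"
      by (simp add: power2_eq_square field_simps)
    ultimately show ?thesis by linarith
  qed
  finally have "(p * q)^2 \<le> ((ei * sj + ej * si) / 2)^2" .
  moreover have "0 \<le> (ei * sj + ej * si) / 2" using assms by simp
  ultimately show ?thesis by (rule power2_le_imp_le)
qed

lemma trace_ineq:
  assumes E: "psd d E" and S: "psd d S"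
  shows "Re (mtrace (E * S)) \<le> Re (mtrace E) * Re (mtrace S)"
proof -
  have Ec: "E \<in> carrier_mat d d" and Sc: "S \<in> carrier_mat d d" using E S by (auto simp: psd_def)
  let ?e = "\<lambda>i. Re (E $$ (i,i))" and ?s = "\<lambda>i. Re (S $$ (i,i))"
  have "Re (mtrace (E * S)) = (\<Sum>i<d. \<Sum>j<d. Re (E $$ (i,j) * S $$ (j,i)))"
    using Ec Sc by (simp add: mtrace_def scalar_prod_def atLeast0LessThan)
  also have "\<dots> \<le> (\<Sum>i<d. \<Sum>j<d. (?e i * ?s j + ?e j * ?s i) / 2)"
  proof (intro sum_mono)
    fix i j assume i: "i \<in> {..<d}" and j: "j \<in> {..<d}"
    have "Re (E $$ (i,j) * S $$ (j,i)) \<le> cmod (E $$ (i,j) * S $$ (j,i))" by (rule complex_Re_le_cmod)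
    also have "\<dots> = cmod (E $$ (i,j)) * cmod (S $$ (j,i))" by (simp add: norm_mult)
    also have "\<dots> \<le> (?e i * ?s j + ?e j * ?s i) / 2"
      using i j by (intro prod_bound psd_offdiag[OF E] psd_offdiag[OF S] psd_diag[OF E] psd_diag[OF S] norm_ge_zero) auto
    finally show "Re (E $$ (i,j) * S $$ (j,i)) \<le> (?e i * ?s j + ?e j * ?s i) / 2" .
  qed
  also have "\<dots> = (\<Sum>i<d. \<Sum>j<d. ?e i * ?s j) / 2 + (\<Sum>i<d. \<Sum>j<d. ?e j * ?s i) / 2"
    by (simp add: sum.distrib sum_divide_distrib add_divide_distrib)
  also have "(\<Sum>i<d. \<Sum>j<d. ?e j * ?s i) = (\<Sum>i<d. \<Sum>j<d. ?e i * ?s j)"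
    by (rule sum.swap)
  also have "(\<Sum>i<d. \<Sum>j<d. ?e i * ?s j) = (\<Sum>i<d. ?e i) * (\<Sum>j<d. ?s j)"
    by (simp add: sum_product)
  finally show ?thesis using mtrace_re[OF E] mtrace_re[OF S] by simp
qed

lemma SS_apply:
  assumes "X \<in> carrier_mat d d" "a < d" "e < d"
  shows "(\<Sum>b<d. \<Sum>c<d. X $$ (b,c) * SS a b c e) = (if a = e then mtrace X else 0) + X $$ (a,e)"
proof -
  have "(\<Sum>b<d. \<Sum>c<d. X $$ (b,c) * SS a b c e) =
    (\<Sum>b<d. \<Sum>c<d. (if a = e \<and> b = c then X $$ (b,c) else 0)) + (\<Sum>b<d. \<Sum>c<d. (if a = b \<and> c = e then X $$ (b,c) else 0))"
  proof -
    have "(\<Sum>b<d. \<Sum>c<d. X $$ (b,c) * SS a b c e) = (\<Sum>b<d. \<Sum>c<d. (if a = e \<and> b = c then X $$ (b,c) else 0) + (if a = b \<and> c = e then X $$ (b,c) else 0))"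
      by (intro sum.cong refl) (simp only: SS_def distrib_left mult_ifz mult_1_right)
    then show ?thesis by (simp only: sum.distrib)
  qed
  also have "(\<Sum>b<d. \<Sum>c<d. (if a = e \<and> b = c then X $$ (b,c) else 0)) = (if a = e then mtrace X else 0)"
  proof (cases "a = e")
    case True
    have "(\<Sum>b<d. \<Sum>c<d. (if a = e \<and> b = c then X $$ (b,c) else 0)) = (\<Sum>b<d. X $$ (b,b))"
      using True by (intro sum.cong refl) (simp add: sum.delta)
    also have "\<dots> = mtrace X" using assms(1) by (simp add: mtrace_def)
    finally show ?thesis using True by simp
  qed simp
  also have "(\<Sum>b<d. \<Sum>c<d. (if a = b \<and> c = e then X $$ (b,c) else 0)) = X $$ (a,e)"
  proof -
    have "(\<Sum>b<d. \<Sum>c<d. (if a = b \<and> c = e then X $$ (b,c) else 0)) = (\<Sum>b<d. if a = b then X $$ (b,e) else 0)"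
    proof (rule sum.cong[OF refl])
      fix b assume "b \<in> {..<d}"
      show "(\<Sum>c<d. (if a = b \<and> c = e then X $$ (b,c) else 0)) = (if a = b then X $$ (b,e) else 0)"
        using assms(3) by (cases "a = b") simp_all
    qed
    also have "\<dots> = X $$ (a,e)" using assms(2) by simp
    finally show ?thesis .
  qed
  finally show ?thesis .
qed

lemma design_apply:
  assumes X: "X \<in> carrier_mat d d" and ae: "a < d" "e < d"
    and hTT: "\<And>a b c e. a < d \<Longrightarrow> b < d \<Longrightarrow> c < d \<Longrightarrow> e < d \<Longrightarrow> TT d K u a b c e = SS a b c e"
  shows "(\<Sum>k\<in>K. (R1 d (u k) * X * R1 d (u k)) $$ (a,e)) = (if a = e then mtrace X else 0) + X $$ (a,e)"
proof -
  have "(\<Sum>k\<in>K. (R1 d (u k) * X * R1 d (u k)) $$ (a,e)) =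
     (\<Sum>k\<in>K. \<Sum>b<d. \<Sum>c<d. X $$ (b,c) * (u k a * cnj (u k b) * u k c * cnj (u k e)))"
    using R1XR1[OF X ae] by simp
  also have "\<dots> = (\<Sum>b<d. \<Sum>k\<in>K. \<Sum>c<d. X $$ (b,c) * (u k a * cnj (u k b) * u k c * cnj (u k e)))"
    by (rule sum.swap)
  also have "\<dots> = (\<Sum>b<d. \<Sum>c<d. \<Sum>k\<in>K. X $$ (b,c) * (u k a * cnj (u k b) * u k c * cnj (u k e)))"
    by (intro sum.cong refl) (rule sum.swap)
  also have "\<dots> = (\<Sum>b<d. \<Sum>c<d. X $$ (b,c) * TT d K u a b c e)"
    unfolding TT_def by (simp add: sum_distrib_left)
  also have "\<dots> = (\<Sum>b<d. \<Sum>c<d. X $$ (b,c) * SS a b c e)"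
    using ae by (intro sum.cong refl) (simp add: hTT)
  also have "\<dots> = (if a = e then mtrace X else 0) + X $$ (a,e)"
    by (rule SS_apply[OF X ae])
  finally show ?thesis .
qed

lemma two_prod:
  "(\<Sum>a<d. \<Sum>b<d. f a b) * (\<Sum>c<d. \<Sum>e<d. g c e) = (\<Sum>a<d. \<Sum>b<d. \<Sum>c<d. \<Sum>e<d. f a b * g c e :: complex)"
  by (simp only: sum_distrib_right) (simp only: sum_distrib_left)

lemma fid_formula:
  assumes E: "E \<in> carrier_mat d d" and S: "S \<in> carrier_mat d d"
    and hTT: "\<And>a b c e. a < d \<Longrightarrow> b < d \<Longrightarrow> c < d \<Longrightarrow> e < d \<Longrightarrow> TT d K u a b c e = SS a b c e"
  shows "(\<Sum>k\<in>K. mtrace (R1 d (u k) * E) * mtrace (R1 d (u k) * S)) = mtrace (E * S) + mtrace E * mtrace S"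
proof -
  have "(\<Sum>k\<in>K. mtrace (R1 d (u k) * E) * mtrace (R1 d (u k) * S)) =
     (\<Sum>k\<in>K. \<Sum>a<d. \<Sum>b<d. \<Sum>c<d. \<Sum>e<d. (E $$ (b,a) * S $$ (e,c)) * (u k a * cnj (u k b) * u k c * cnj (u k e)))"
    unfolding mtrace_R1[OF E] mtrace_R1[OF S] two_prod by (intro sum.cong refl) (simp add: algebra_simps)
  also have "\<dots> = (\<Sum>a<d. \<Sum>b<d. \<Sum>c<d. \<Sum>e<d. \<Sum>k\<in>K. (E $$ (b,a) * S $$ (e,c)) * (u k a * cnj (u k b) * u k c * cnj (u k e)))"
    by (rule swap_out[symmetric])
  also have "\<dots> = (\<Sum>a<d. \<Sum>b<d. \<Sum>c<d. \<Sum>e<d. (E $$ (b,a) * S $$ (e,c)) * TT d K u a b c e)"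
    unfolding TT_def by (simp add: sum_distrib_left)
  also have "\<dots> = (\<Sum>a<d. \<Sum>b<d. \<Sum>c<d. \<Sum>e<d. (E $$ (b,a) * S $$ (e,c)) * SS a b c e)"
    by (intro sum.cong refl) (simp add: hTT)
  also have "\<dots> = (\<Sum>a<d. \<Sum>b<d. \<Sum>c<d. \<Sum>e<d. (E $$ (b,a) * S $$ (e,c)) * (if a = e \<and> b = c then 1 else 0)) +
      (\<Sum>a<d. \<Sum>b<d. \<Sum>c<d. \<Sum>e<d. (E $$ (b,a) * S $$ (e,c)) * (if a = b \<and> c = e then 1 else 0))"
    by (simp only: sum.distrib[symmetric] distrib_left[symmetric]) (simp only: SS_def)
  also have "\<dots> = (\<Sum>a<d. \<Sum>b<d. E $$ (b,a) * S $$ (a,b)) + (\<Sum>a<d. \<Sum>c<d. E $$ (a,a) * S $$ (c,c))"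
    unfolding delta1 delta2 by (rule refl)
  also have "(\<Sum>a<d. \<Sum>b<d. E $$ (b,a) * S $$ (a,b)) = mtrace (E * S)"
    unfolding mtrace_mult[OF E S] by (rule sum.swap)
  also have "(\<Sum>a<d. \<Sum>c<d. E $$ (a,a) * S $$ (c,c)) = mtrace E * mtrace S"
    using E S by (simp add: mtrace_def sum_product)
  finally show ?thesis .
qed

lemma mtrace_msum:
  assumes "finite B" "\<And>b. b \<in> B \<Longrightarrow> E b \<in> carrier_mat d d"
  shows "mtrace (msum d E B) = (\<Sum>b\<in>B. mtrace (E b))"
proof -
  have "mtrace (msum d E B) = (\<Sum>i<d. \<Sum>b\<in>B. E b $$ (i,i))"
    by (simp add: mtrace_def msum_def)
  also have "\<dots> = (\<Sum>b\<in>B. \<Sum>i<d. E b $$ (i,i))" by (rule sum.swap)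
  also have "\<dots> = (\<Sum>b\<in>B. mtrace (E b))"
    using assms(2) by (intro sum.cong refl) (auto simp: mtrace_def dest: carrier_matD)
  finally show ?thesis .
qed

lemma mtrace_one: "mtrace (1\<^sub>m d) = of_nat d"
  by (simp add: mtrace_def)

lemma psd_R1: "psd d (R1 d x)"
proof -
  have qf: "quad_form d (R1 d x) v = (\<Sum>p<d. cnj (v $ p) * x p) * cnj (\<Sum>p<d. cnj (v $ p) * x p)" for v
  proof -
    have "quad_form d (R1 d x) v = (\<Sum>p<d. \<Sum>q<d. (cnj (v $ p) * x p) * cnj (cnj (v $ q) * x q))"
      unfolding quad_form_def by (intro sum.cong refl) (simp add: R1_def algebra_simps)
    also have "\<dots> = (\<Sum>p<d. cnj (v $ p) * x p) * cnj (\<Sum>p<d. cnj (v $ p) * x p)"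
      by (simp add: sum_product cnj_sum)
    finally show ?thesis .
  qed
  have "quad_form d (R1 d x) v = complex_of_real ((cmod (\<Sum>p<d. cnj (v $ p) * x p))^2)" for v
    unfolding complex_norm_square by (rule qf)
  then show ?thesis unfolding psd_def by simp
qed

lemma sum_prod_set: "sum g (A \<times> B) = (\<Sum>a\<in>A. \<Sum>b\<in>B. g (a,b))"
  by (subst sum.cartesian_product) simp

lemma fp_row:
  fixes d :: nat and Proj :: "nat \<Rightarrow> nat \<Rightarrow> complex mat"
  assumes d2: "d \<ge> 2" and j: "j \<in> {1..d+1}" and i: "i \<in> {1..d}"
    and same: "\<And>j i k. j \<in> {1..d+1} \<Longrightarrow> i \<in> {1..d} \<Longrightarrow> k \<in> {1..d} \<Longrightarrow>
                 mtrace (Proj j i * Proj j k) = (if i = k then 1 else 0)"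
    and diff: "\<And>j l i k. j \<in> {1..d+1} \<Longrightarrow> l \<in> {1..d+1} \<Longrightarrow> i \<in> {1..d} \<Longrightarrow> k \<in> {1..d} \<Longrightarrow>
                 j \<noteq> l \<Longrightarrow> mtrace (Proj j i * Proj l k) = 1 / of_nat d"
  shows "(\<Sum>l\<in>{1..d+1} \<times> {1..d}. (mtrace (Proj j i * Proj (fst l) (snd l)))^2) = 2"
proof -
  let ?h = "\<lambda>l. \<Sum>m\<in>{1..d}. (mtrace (Proj j i * Proj l m))^2"
  have hj: "?h j = 1"
  proof -
    have "?h j = (\<Sum>m\<in>{1..d}. if i = m then 1 else 0)"
      using j i by (intro sum.cong refl) (simp add: same)
    also have "\<dots> = 1" using i by simp
    finally show ?thesis .
  qed
  have hl: "?h l = 1 / of_nat d" if "l \<in> {1..d+1} - {j}" for l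
  proof -
    have "?h l = (\<Sum>m\<in>{1..d}. (1 / of_nat d)^2)"
      using j i that by (intro sum.cong refl) (simp add: diff)
    also have "\<dots> = of_nat d * (1 / of_nat d)^2" by simp
    also have "\<dots> = 1 / of_nat d" using d2 by (simp add: power2_eq_square)
    finally show ?thesis .
  qed
  have "(\<Sum>l\<in>{1..d+1} \<times> {1..d}. (mtrace (Proj j i * Proj (fst l) (snd l)))^2) = (\<Sum>l\<in>{1..d+1}. ?h l)"
    by (simp add: sum_prod_set)
  also have "\<dots> = ?h j + (\<Sum>l\<in>{1..d+1} - {j}. ?h l)"
    using j by (rule sum.remove[OF finite_atLeastAtMost])
  also have "(\<Sum>l\<in>{1..d+1} - {j}. ?h l) = (\<Sum>l\<in>{1..d+1} - {j}. 1 / of_nat d)"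
    by (intro sum.cong refl) (rule hl)
  also have "\<dots> = of_nat d * (1 / of_nat d)"
    using j by simp
  also have "\<dots> = 1" using d2 by simp
  finally show ?thesis using hj by simp
qed

lemma R1_dims[simp]: "dim_row (R1 d x) = d" "dim_col (R1 d x) = d" by (simp_all add: R1_def)

lemma Re_ofreal_mult: "Re (complex_of_real r * z) = r * Re z" by simp

theorem mainTheorem5:
  fixes d :: nat and Proj :: "nat \<Rightarrow> nat \<Rightarrow> complex mat"
  assumes d2: "d \<ge> 2"
    and proj: "\<And>j i. j \<in> {1..d+1} \<Longrightarrow> i \<in> {1..d} \<Longrightarrow> rank_one_projector d (Proj j i)"
    and same: "\<And>j i k. j \<in> {1..d+1} \<Longrightarrow> i \<in> {1..d} \<Longrightarrow> k \<in> {1..d} \<Longrightarrow>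
                 mtrace (Proj j i * Proj j k) = (if i = k then 1 else 0)"
    and diff: "\<And>j l i k. j \<in> {1..d+1} \<Longrightarrow> l \<in> {1..d+1} \<Longrightarrow> i \<in> {1..d} \<Longrightarrow> k \<in> {1..d} \<Longrightarrow>
                 j \<noteq> l \<Longrightarrow> mtrace (Proj j i * Proj l k) = 1 / of_nat d"
  shows "(\<forall>X \<in> carrier_mat d d.
            msum d (\<lambda>(j,i). (1 / (of_nat d * (of_nat d + 1))) \<cdot>\<^sub>m (Proj j i * X * Proj j i))
                 ({1..d+1} \<times> {1..d})
            = (1 / (of_nat d * (of_nat d + 1))) \<cdot>\<^sub>m (mtrace X \<cdot>\<^sub>m 1\<^sub>m d + X))
         \<and> accessible_fidelity d ({1..d+1} \<times> {1..d}) (\<lambda>(j,i). Proj j i) (\<lambda>_. 1 / (real d * (real d + 1)))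
            = 2 / (real d + 1)"
proof -
  define K where "K = {1..d+1} \<times> {1..d}"
  have finK: "finite K" by (simp add: K_def)
  have cardK: "card K = d * (d + 1)" by (simp add: K_def card_cartesian_product)
  have "\<forall>k\<in>K. \<exists>v. v \<in> carrier_vec d \<and> (\<Sum>i<d. (cmod (v $ i))\<^sup>2) = 1 \<and>
      Proj (fst k) (snd k) = mat d d (\<lambda>(i,j). v $ i * cnj (v $ j))"
  proof
    fix k assume "k \<in> K"
    then obtain j i where k: "k = (j,i)" "j \<in> {1..d+1}" "i \<in> {1..d}" by (auto simp: K_def)
    then show "\<exists>v. v \<in> carrier_vec d \<and> (\<Sum>i<d. (cmod (v $ i))\<^sup>2) = 1 \<and>
      Proj (fst k) (snd k) = mat d d (\<lambda>(i,j). v $ i * cnj (v $ j))"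
      using proj[OF k(2,3)] unfolding rank_one_projector_def by auto
  qed
  from bchoice[OF this] obtain V where V: "\<forall>k\<in>K. V k \<in> carrier_vec d \<and> (\<Sum>i<d. (cmod (V k $ i))\<^sup>2) = 1 \<and>
      Proj (fst k) (snd k) = mat d d (\<lambda>(i,j). V k $ i * cnj (V k $ j))" by blast
  define u where "u k a = V k $ a" for k a
  have PR: "Proj (fst k) (snd k) = R1 d (u k)" if "k \<in> K" for k
    using V that by (simp add: R1_def u_def)
  have nrm: "ipr d u k k = 1" if k: "k \<in> K" for k
  proof -
    have "complex_of_real (\<Sum>i<d. (cmod (V k $ i))\<^sup>2) = ipr d u k k"
      unfolding of_real_sum complex_norm_square ipr_def u_def by (rule refl)
    then show ?thesis using V k by simp
  qed
  have trk: "ipr d u k l * cnj (ipr d u k l) = mtrace (Proj (fst k) (snd k) * Proj (fst l) (snd l))"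
    if "k \<in> K" "l \<in> K" for k l
    using that by (simp add: PR mtrace_R1R1 ipr_def)
  have fp: "(\<Sum>k\<in>K. \<Sum>l\<in>K. (ipr d u k l * cnj (ipr d u k l))^2) = 2 * of_nat (card K)"
  proof -
    have "(\<Sum>k\<in>K. \<Sum>l\<in>K. (ipr d u k l * cnj (ipr d u k l))^2) =
        (\<Sum>k\<in>K. \<Sum>l\<in>K. (mtrace (Proj (fst k) (snd k) * Proj (fst l) (snd l)))^2)"
      by (intro sum.cong refl) (simp add: trk)
    also have "\<dots> = (\<Sum>k\<in>K. 2)"
    proof (rule sum.cong[OF refl])
      fix k assume k: "k \<in> K"
      then show "(\<Sum>l\<in>K. (mtrace (Proj (fst k) (snd k) * Proj (fst l) (snd l)))^2) = 2"
        unfolding K_def using fp_row[OF d2 _ _ same diff, of "fst k" "snd k"] by (auto simp: mem_Times_iff)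
    qed
    also have "\<dots> = 2 * of_nat (card K)" by simp
    finally show ?thesis .
  qed
  have hTT: "TT d K u a b c e = SS a b c e" if "a < d" "b < d" "c < d" "e < d" for a b c e
    by (rule TT_eq_SS[OF finK nrm cardK fp that])
  define cc :: complex where "cc = 1 / (of_nat d * (of_nat d + 1))"
  have part1: "\<forall>X \<in> carrier_mat d d.
            msum d (\<lambda>(j,i). cc \<cdot>\<^sub>m (Proj j i * X * Proj j i)) K = cc \<cdot>\<^sub>m (mtrace X \<cdot>\<^sub>m 1\<^sub>m d + X)"
  proof
    fix X :: "complex mat" assume X: "X \<in> carrier_mat d d"
    show "msum d (\<lambda>(j,i). cc \<cdot>\<^sub>m (Proj j i * X * Proj j i)) K = cc \<cdot>\<^sub>m (mtrace X \<cdot>\<^sub>m 1\<^sub>m d + X)"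
    proof (rule eq_matI)
      fix a e assume a: "a < dim_row (cc \<cdot>\<^sub>m (mtrace X \<cdot>\<^sub>m 1\<^sub>m d + X))" and e: "e < dim_col (cc \<cdot>\<^sub>m (mtrace X \<cdot>\<^sub>m 1\<^sub>m d + X))"
      then have a': "a < d" and e': "e < d" using X by auto
      have "msum d (\<lambda>(j,i). cc \<cdot>\<^sub>m (Proj j i * X * Proj j i)) K $$ (a,e) =
          (\<Sum>k\<in>K. (case k of (j,i) \<Rightarrow> cc \<cdot>\<^sub>m (Proj j i * X * Proj j i)) $$ (a,e))"
        using a' e' by (simp add: msum_def)
      also have "\<dots> = (\<Sum>k\<in>K. cc * (R1 d (u k) * X * R1 d (u k)) $$ (a,e))"
      proof (rule sum.cong[OF refl])
        fix k assume k: "k \<in> K"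
        have "(case k of (j,i) \<Rightarrow> cc \<cdot>\<^sub>m (Proj j i * X * Proj j i)) = cc \<cdot>\<^sub>m (R1 d (u k) * X * R1 d (u k))"
          using PR[OF k] by (simp add: case_prod_beta)
        show "(case k of (j,i) \<Rightarrow> cc \<cdot>\<^sub>m (Proj j i * X * Proj j i)) $$ (a,e) = cc * (R1 d (u k) * X * R1 d (u k)) $$ (a,e)"
        proof -
          have M: "R1 d (u k) * X * R1 d (u k) \<in> carrier_mat d d" using X by (auto intro!: mult_carrier_mat)
          show ?thesis using a' e' by (simp add: case_prod_beta PR[OF k] carrier_matD[OF M])
        qed
      qed
      also have "\<dots> = cc * (\<Sum>k\<in>K. (R1 d (u k) * X * R1 d (u k)) $$ (a,e))"
        by (simp add: sum_distrib_left)
      also have "\<dots> = cc * ((if a = e then mtrace X else 0) + X $$ (a,e))"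
        using design_apply[OF X a' e' hTT] by simp
      also have "\<dots> = (cc \<cdot>\<^sub>m (mtrace X \<cdot>\<^sub>m 1\<^sub>m d + X)) $$ (a,e)"
        using a' e' X by simp
      finally show "msum d (\<lambda>(j,i). cc \<cdot>\<^sub>m (Proj j i * X * Proj j i)) K $$ (a,e) = (cc \<cdot>\<^sub>m (mtrace X \<cdot>\<^sub>m 1\<^sub>m d + X)) $$ (a,e)" .
    qed (use X in \<open>auto simp: msum_def\<close>)
  qed
  define pp :: real where "pp = 1 / (real d * (real d + 1))"
  have pp0: "pp \<ge> 0" by (simp add: pp_def)
  have avg_eq: "avg_fidelity K (\<lambda>(j,i). Proj j i) (\<lambda>_. pp) B E \<sigma> =
      pp * (\<Sum>b\<in>B. Re (mtrace (E b * \<sigma> b) + mtrace (E b) * mtrace (\<sigma> b)))"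
    if EB: "\<And>b. b \<in> B \<Longrightarrow> E b \<in> carrier_mat d d \<and> \<sigma> b \<in> carrier_mat d d" for B E \<sigma>
  proof -
    have "(\<Sum>b\<in>B. \<Sum>k\<in>K. complex_of_real pp * mtrace ((case k of (j,i) \<Rightarrow> Proj j i) * E b) * mtrace ((case k of (j,i) \<Rightarrow> Proj j i) * \<sigma> b)) =
        (\<Sum>b\<in>B. complex_of_real pp * (mtrace (E b * \<sigma> b) + mtrace (E b) * mtrace (\<sigma> b)))"
    proof (rule sum.cong[OF refl])
      fix b assume b: "b \<in> B"
      have "(\<Sum>k\<in>K. complex_of_real pp * mtrace ((case k of (j,i) \<Rightarrow> Proj j i) * E b) * mtrace ((case k of (j,i) \<Rightarrow> Proj j i) * \<sigma> b)) =
          (\<Sum>k\<in>K. complex_of_real pp * (mtrace (R1 d (u k) * E b) * mtrace (R1 d (u k) * \<sigma> b)))"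
        by (intro sum.cong refl) (simp add: case_prod_beta PR)
      also have "\<dots> = complex_of_real pp * (mtrace (E b * \<sigma> b) + mtrace (E b) * mtrace (\<sigma> b))"
        unfolding sum_distrib_left[symmetric] using EB[OF b] fid_formula[of "E b" d "\<sigma> b" K u] hTT by simp
      finally show "(\<Sum>k\<in>K. complex_of_real pp * mtrace ((case k of (j,i) \<Rightarrow> Proj j i) * E b) * mtrace ((case k of (j,i) \<Rightarrow> Proj j i) * \<sigma> b)) =
          complex_of_real pp * (mtrace (E b * \<sigma> b) + mtrace (E b) * mtrace (\<sigma> b))" .
    qed
    then show ?thesis unfolding avg_fidelity_def by (simp add: Re_sum sum_distrib_left)
  qed
  have target: "pp * (2 * real d) = 2 / (real d + 1)"
  proof -
    have p: "real d > 0" using d2 by simp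
    have "pp * (2 * real d) = (real d * 2) / (real d * (real d + 1))" by (simp add: pp_def)
    also have "\<dots> = 2 / (real d + 1)" using p by (simp only: mult_divide_mult_cancel_left_if) simp
    finally show ?thesis .
  qed
  have upper: "avg_fidelity K (\<lambda>(j,i). Proj j i) (\<lambda>_. pp) B E \<sigma> \<le> 2 / (real d + 1)"
    if P: "povm d B E" and D: "\<forall>b\<in>B. density_op d (\<sigma> b)" for B E \<sigma>
  proof -
    have finB: "finite B" and Epsd: "\<And>b. b \<in> B \<Longrightarrow> psd d (E b)" and Esum: "msum d E B = 1\<^sub>m d"
      using P by (auto simp: povm_def)
    have Spsd: "\<And>b. b \<in> B \<Longrightarrow> psd d (\<sigma> b)" and Str: "\<And>b. b \<in> B \<Longrightarrow> mtrace (\<sigma> b) = 1"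
      using D by (auto simp: density_op_def)
    have EB: "\<And>b. b \<in> B \<Longrightarrow> E b \<in> carrier_mat d d \<and> \<sigma> b \<in> carrier_mat d d"
      using Epsd Spsd by (auto simp: psd_def)
    have "(\<Sum>b\<in>B. Re (mtrace (E b * \<sigma> b) + mtrace (E b) * mtrace (\<sigma> b))) \<le> (\<Sum>b\<in>B. 2 * Re (mtrace (E b)))"
    proof (rule sum_mono)
      fix b assume b: "b \<in> B"
      have "Re (mtrace (E b * \<sigma> b)) \<le> Re (mtrace (E b)) * Re (mtrace (\<sigma> b))"
        by (rule trace_ineq[OF Epsd[OF b] Spsd[OF b]])
      then show "Re (mtrace (E b * \<sigma> b) + mtrace (E b) * mtrace (\<sigma> b)) \<le> 2 * Re (mtrace (E b))"
        using Str[OF b] by simp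
    qed
    also have "\<dots> = 2 * Re (\<Sum>b\<in>B. mtrace (E b))" by (simp add: Re_sum sum_distrib_left)
    also have "(\<Sum>b\<in>B. mtrace (E b)) = mtrace (msum d E B)"
      using mtrace_msum[OF finB, of E d] EB by simp
    also have "\<dots> = of_nat d" by (simp add: Esum mtrace_one)
    finally have "(\<Sum>b\<in>B. Re (mtrace (E b * \<sigma> b) + mtrace (E b) * mtrace (\<sigma> b))) \<le> 2 * real d" by simp
    then have "pp * (\<Sum>b\<in>B. Re (mtrace (E b * \<sigma> b) + mtrace (E b) * mtrace (\<sigma> b))) \<le> pp * (2 * real d)"
      using pp0 by (rule mult_left_mono)
    then show ?thesis using avg_eq[OF EB] target by simp
  qed
  define dl :: "nat \<Rightarrow> nat \<Rightarrow> complex" where "dl b i = (if i = b then 1 else 0)" for b i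
  define E0 where "E0 b = R1 d (dl b)" for b
  have trE0: "mtrace (E0 b) = 1" if "b < d" for b
    using that by (simp add: E0_def R1_def mtrace_def dl_def cnj_ifz ifz_mult)
  have trE0E0: "mtrace (E0 b * E0 b) = 1" if "b < d" for b
  proof -
    have "(\<Sum>a<d. dl b a * cnj (dl b a)) = 1" using that by (simp add: dl_def cnj_ifz ifz_mult)
    then show ?thesis unfolding E0_def mtrace_R1R1 by simp
  qed
  have povm0: "povm d {..<d} E0"
    unfolding povm_def
  proof (intro conjI ballI)
    show "msum d E0 {..<d} = 1\<^sub>m d"
      by (rule eq_matI) (auto simp: msum_def E0_def R1_def dl_def cnj_ifz ifz_mult)
  qed (auto simp: E0_def psd_R1)
  have dens0: "\<forall>b\<in>{..<d}. density_op d (E0 b)"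
    using trE0 by (auto simp: density_op_def E0_def psd_R1)
  have val0: "avg_fidelity K (\<lambda>(j,i). Proj j i) (\<lambda>_. pp) {..<d} E0 E0 = 2 / (real d + 1)"
  proof -
    have "avg_fidelity K (\<lambda>(j,i). Proj j i) (\<lambda>_. pp) {..<d} E0 E0 =
        pp * (\<Sum>b\<in>{..<d}. Re (mtrace (E0 b * E0 b) + mtrace (E0 b) * mtrace (E0 b)))"
      by (rule avg_eq) (simp add: E0_def)
    also have "\<dots> = pp * (\<Sum>b\<in>{..<d}. 2)"
      using trE0 trE0E0 by simp
    also have "\<dots> = 2 / (real d + 1)" using target by (simp add: mult.commute)
    finally show ?thesis .
  qed
  have part2: "accessible_fidelity d K (\<lambda>(j,i). Proj j i) (\<lambda>_. pp) = 2 / (real d + 1)"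
    unfolding accessible_fidelity_def
  proof (rule cSup_eq_maximum)
    show "2 / (real d + 1) \<in> {avg_fidelity K (\<lambda>(j,i). Proj j i) (\<lambda>_. pp) B E \<sigma> | B E \<sigma>.
      povm d B E \<and> (\<forall>b\<in>B. density_op d (\<sigma> b))}"
      using povm0 dens0 val0 by force
  next
    fix x assume "x \<in> {avg_fidelity K (\<lambda>(j,i). Proj j i) (\<lambda>_. pp) B E \<sigma> | B E \<sigma>.
      povm d B E \<and> (\<forall>b\<in>B. density_op d (\<sigma> b))}"
    then show "x \<le> 2 / (real d + 1)" using upper by blast
  qed
  show ?thesis using part1 part2 unfolding K_def cc_def pp_def by simp
qed

end
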